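(* For Global SEMO using the alternative mutation operator on the weighted vertex cover problem, a solution $x$ with the two properties (1) $LP(x)=LP(0^n)-Cost(x)$ and (2) there is an optimal solution of the LP for $G(x)$ which assigns $1/2$ to each non-isolated vertex of $G(x)$, is included in the population in expected time $O\big(OPT\cdot n(\log W_{max}+\log n+OPT)\big)$.
   Context: Weighted vertex cover: $G=(V,E)$, $V=\{v_1,\dots,v_n\}$, $w:V\to\mathbb{N}^+$, $W_{max}=\max_v w(v)$; $OPT$ is the minimum weight of a vertex cover. Search points $x\in\{0,1\}^n$ ($v_i$ selected iff $x_i=1$); $Cost(x)=\sum_i w(v_i)x_i$. $G(x)=(V(x),E(x))$ with $V(x)=V\setminus\{v_i:x_i=1\}$, $E(x)$ = edges with no selected endpoint. The LP for $G(x)$: minimize $\sum_{v_i\in V(x)}w(v_i)y_i$ s.t. $y_i+y_j\ge1$ for $\{v_i,v_j\}\in E(x)$, $0\le y_i\le1$; $LP(x)$ is its optimal value. $f=(Cost,LP)$, $f(x)\le f(y)$ componentwise. Alternative mutation operator on $x$: choose $b\in\{0,1\}$ uniformly; if $b=1$, flip each $x_i$ with probability $1/2$ if $v_i$ is incident to an edge of $E(x)$ and with probability $1/n$ otherwise; if $b=0$, flip each bit independently with probability $1/n$. Global SEMO: start with uniformly random $x$, $P=\{x\}$; each iteration choose $x\in P$ uniformly, create $x'$ by the alternative mutation operator; if no $y\in P$ has $f(y)\le f(x')$, add $x'$ and delete all other $z\in P$ with $f(x')\le f(z)$. Time = number of iterations. *)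

theory Defs
  imports "HOL-Probability.Probability"
begin

text \<open>Search points are bit vectors x :: nat => bool with x i = False for i >= n
  (x i = True iff vertex v_i is selected).\<close>

definition valid_instance :: "nat \<Rightarrow> nat set set \<Rightarrow> (nat \<Rightarrow> nat) \<Rightarrow> bool" where
  "valid_instance n E w \<longleftrightarrow>
     (\<forall>e\<in>E. card e = 2 \<and> e \<subseteq> {..<n}) \<and> (\<forall>i<n. w i > 0)"

definition Wmax :: "nat \<Rightarrow> (nat \<Rightarrow> nat) \<Rightarrow> nat" where
  "Wmax n w = Max (w ` {..<n})"

definition is_vertex_cover :: "nat \<Rightarrow> nat set set \<Rightarrow> nat set \<Rightarrow> bool" where
  "is_vertex_cover n E S \<longleftrightarrow> S \<subseteq> {..<n} \<and> (\<forall>e\<in>E. e \<inter> S \<noteq> {})"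

definition OPT :: "nat \<Rightarrow> nat set set \<Rightarrow> (nat \<Rightarrow> nat) \<Rightarrow> nat" where
  "OPT n E w = Min {(\<Sum>i\<in>S. w i) | S. is_vertex_cover n E S}"

definition Cost :: "nat \<Rightarrow> (nat \<Rightarrow> nat) \<Rightarrow> (nat \<Rightarrow> bool) \<Rightarrow> nat" where
  "Cost n w x = (\<Sum>i\<in>{i. i < n \<and> x i}. w i)"

definition Vx :: "nat \<Rightarrow> (nat \<Rightarrow> bool) \<Rightarrow> nat set" where
  "Vx n x = {i. i < n \<and> \<not> x i}"

definition Ex :: "nat set set \<Rightarrow> (nat \<Rightarrow> bool) \<Rightarrow> nat set set" where
  "Ex E x = {e\<in>E. \<forall>i\<in>e. \<not> x i}"

definition nonisolated :: "nat set set \<Rightarrow> (nat \<Rightarrow> bool) \<Rightarrow> nat \<Rightarrow> bool" where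
  "nonisolated E x i \<longleftrightarrow> (\<exists>e\<in>Ex E x. i \<in> e)"

text \<open>LP relaxation for G(x). Each edge e = {v_i, v_j} gives y_i + y_j >= 1,
  written as the sum of y over e (e has exactly two elements).\<close>
definition lp_feasible :: "nat \<Rightarrow> nat set set \<Rightarrow> (nat \<Rightarrow> bool) \<Rightarrow> (nat \<Rightarrow> real) \<Rightarrow> bool" where
  "lp_feasible n E x y \<longleftrightarrow>
     (\<forall>e\<in>Ex E x. (\<Sum>i\<in>e. y i) \<ge> 1) \<and> (\<forall>i\<in>Vx n x. 0 \<le> y i \<and> y i \<le> 1)"

definition lp_obj :: "nat \<Rightarrow> (nat \<Rightarrow> nat) \<Rightarrow> (nat \<Rightarrow> bool) \<Rightarrow> (nat \<Rightarrow> real) \<Rightarrow> real" where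
  "lp_obj n w x y = (\<Sum>i\<in>Vx n x. real (w i) * y i)"

definition LP :: "nat \<Rightarrow> nat set set \<Rightarrow> (nat \<Rightarrow> nat) \<Rightarrow> (nat \<Rightarrow> bool) \<Rightarrow> real" where
  "LP n E w x = Inf {lp_obj n w x y | y. lp_feasible n E x y}"

definition lp_optimal :: "nat \<Rightarrow> nat set set \<Rightarrow> (nat \<Rightarrow> nat) \<Rightarrow> (nat \<Rightarrow> bool) \<Rightarrow> (nat \<Rightarrow> real) \<Rightarrow> bool" where
  "lp_optimal n E w x y \<longleftrightarrow> lp_feasible n E x y \<and> lp_obj n w x y = LP n E w x"

definition good_solution :: "nat \<Rightarrow> nat set set \<Rightarrow> (nat \<Rightarrow> nat) \<Rightarrow> (nat \<Rightarrow> bool) \<Rightarrow> bool" where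
  "good_solution n E w x \<longleftrightarrow>
     LP n E w x = LP n E w (\<lambda>_. False) - real (Cost n w x) \<and>
     (\<exists>y. lp_optimal n E w x y \<and> (\<forall>i\<in>Vx n x. nonisolated E x i \<longrightarrow> y i = 1/2))"

definition weakly_dom :: "nat \<Rightarrow> nat set set \<Rightarrow> (nat \<Rightarrow> nat) \<Rightarrow> (nat \<Rightarrow> bool) \<Rightarrow> (nat \<Rightarrow> bool) \<Rightarrow> bool" where
  "weakly_dom n E w a b \<longleftrightarrow> Cost n w a \<le> Cost n w b \<and> LP n E w a \<le> LP n E w b"

definition mutate :: "nat \<Rightarrow> nat set set \<Rightarrow> (nat \<Rightarrow> bool) \<Rightarrow> (nat \<Rightarrow> bool) pmf" where
  "mutate n E x =
     bind_pmf (bernoulli_pmf (1/2)) (\<lambda>b.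
       map_pmf (\<lambda>fl i. x i \<noteq> fl i)
         (Pi_pmf {..<n} False (\<lambda>i. bernoulli_pmf
            (if b \<and> nonisolated E x i then 1/2 else 1 / real n))))"

definition semo_update :: "nat \<Rightarrow> nat set set \<Rightarrow> (nat \<Rightarrow> nat) \<Rightarrow> (nat \<Rightarrow> bool) set \<Rightarrow> (nat \<Rightarrow> bool) \<Rightarrow> (nat \<Rightarrow> bool) set" where
  "semo_update n E w P x' =
     (if \<exists>y\<in>P. weakly_dom n E w y x' then P
      else insert x' {z\<in>P. \<not> weakly_dom n E w x' z})"

definition semo_step :: "nat \<Rightarrow> nat set set \<Rightarrow> (nat \<Rightarrow> nat) \<Rightarrow> (nat \<Rightarrow> bool) set \<Rightarrow> (nat \<Rightarrow> bool) set pmf" where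
  "semo_step n E w P =
     bind_pmf (pmf_of_set P) (\<lambda>x. map_pmf (semo_update n E w P) (mutate n E x))"

definition init_point :: "nat \<Rightarrow> (nat \<Rightarrow> bool) pmf" where
  "init_point n = Pi_pmf {..<n} False (\<lambda>_. bernoulli_pmf (1/2))"

definition hit :: "nat \<Rightarrow> nat set set \<Rightarrow> (nat \<Rightarrow> nat) \<Rightarrow> (nat \<Rightarrow> bool) set \<Rightarrow> bool" where
  "hit n E w P \<longleftrightarrow> (\<exists>x\<in>P. good_solution n E w x)"

text \<open>Distribution of the population after t iterations of Global SEMO, where the
  process is stopped (frozen) once a good solution has been included.  Hence
  "not hit after t iterations of the stopped process" is exactly the event that
  no good solution has been in the population at any of the times 0..t.\<close>
primrec stopped_pop :: "nat \<Rightarrow> nat set set \<Rightarrow> (nat \<Rightarrow> nat) \<Rightarrow> nat \<Rightarrow> (nat \<Rightarrow> bool) set pmf" where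
  "stopped_pop n E w 0 = map_pmf (\<lambda>x. {x}) (init_point n)"
| "stopped_pop n E w (Suc t) =
     bind_pmf (stopped_pop n E w t)
       (\<lambda>P. if hit n E w P then return_pmf P else semo_step n E w P)"

text \<open>Expected hitting time E[T] = sum over t of Pr[T > t].\<close>
definition expected_hitting_time :: "nat \<Rightarrow> nat set set \<Rightarrow> (nat \<Rightarrow> nat) \<Rightarrow> ennreal" where
  "expected_hitting_time n E w =
     (\<Sum>t. ennreal (measure_pmf.prob (stopped_pop n E w t) {P. \<not> hit n E w P}))"

end

theory Submission
  imports Defs
begin


lemma Vx_finite: "finite (Vx n x)" by (simp add: Vx_def)

lemma Ex_sub_Vx:
  assumes "valid_instance n E w" "e \<in> Ex E x" shows "e \<subseteq> Vx n x"
  using assms by (auto simp: valid_instance_def Ex_def Vx_def)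

lemma edge_two:
  assumes "valid_instance n E w" "e \<in> E" obtains i j where "e = {i,j}" "i \<noteq> j" "i < n" "j < n"
proof -
  have "card e = 2" "e \<subseteq> {..<n}" using assms by (auto simp: valid_instance_def)
  then obtain i j where "e = {i,j}" "i \<noteq> j" by (meson card_2_iff)
  then show ?thesis using that \<open>e \<subseteq> {..<n}\<close> by auto
qed

lemma feasible_cong:
  assumes "valid_instance n E w" "\<And>i. i \<in> Vx n x \<Longrightarrow> y i = y' i"
  shows "lp_feasible n E x y = lp_feasible n E x y'"
proof -
  have "\<And>e. e \<in> Ex E x \<Longrightarrow> (\<Sum>i\<in>e. y i) = (\<Sum>i\<in>e. y' i)"
    using Ex_sub_Vx[OF assms(1)] assms(2) by (intro sum.cong refl) blast
  then show ?thesis using assms unfolding lp_feasible_def by auto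
qed

lemma obj_nonneg: "lp_feasible n E x y \<Longrightarrow> 0 \<le> lp_obj n w x y"
  unfolding lp_feasible_def lp_obj_def by (intro sum_nonneg) auto

lemma LP_le_obj: "lp_feasible n E x y \<Longrightarrow> LP n E w x \<le> lp_obj n w x y"
  unfolding LP_def
  by (rule cInf_lower) (auto intro!: bdd_belowI[where m=0] obj_nonneg)

definition lvl :: "real \<Rightarrow> real" where "lvl a = min a (1 - a)"

definition Dset :: "nat \<Rightarrow> (nat \<Rightarrow> bool) \<Rightarrow> (nat \<Rightarrow> real) \<Rightarrow> real set" where
  "Dset n x y = {lvl (y i) | i. i \<in> Vx n x \<and> 0 < lvl (y i) \<and> lvl (y i) < 1/2}"

lemma Dset_finite: "finite (Dset n x y)"
proof -
  have "Dset n x y \<subseteq> (\<lambda>i. lvl (y i)) ` Vx n x" unfolding Dset_def by auto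
  then show ?thesis using finite_subset Vx_finite by blast
qed

lemma round_step:
  assumes vi: "valid_instance n E w" and fe: "lp_feasible n E x y" and ne: "Dset n x y \<noteq> {}"
  shows "\<exists>y'. lp_feasible n E x y' \<and> lp_obj n w x y' \<le> lp_obj n w x y \<and> Dset n x y' \<subset> Dset n x y"
proof -
  let ?D = "Dset n x y"
  define a where "a = Min ?D"
  define a' where "a' = Min (insert (1/2) {b\<in>?D. a < b})"
  have fD: "finite ?D" by (rule Dset_finite)
  have aD: "a \<in> ?D" using fD ne a_def by auto
  have amin: "\<And>b. b \<in> ?D \<Longrightarrow> a \<le> b" using fD a_def by auto
  have a_bnd: "0 < a" "a < 1/2" using aD unfolding Dset_def by auto
  have fA: "finite (insert (1/2) {b\<in>?D. a < b})" using fD by auto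
  have a'_le: "a' \<le> 1/2" using fA unfolding a'_def by (intro Min_le) auto
  have a'_mem: "a' \<in> insert (1/2) {b\<in>?D. a < b}" using fA a'_def Min_in by blast
  have a_lt: "a < a'" using a'_mem a_bnd by auto
  have a'min: "\<And>b. b \<in> ?D \<Longrightarrow> a < b \<Longrightarrow> a' \<le> b" using fA a'_def by auto
  have yb: "\<And>k. k \<in> Vx n x \<Longrightarrow> 0 \<le> y k \<and> y k \<le> 1" using fe by (auto simp: lp_feasible_def)
  have cases: "y k = 0 \<or> y k = 1 \<or> y k = a \<or> y k = 1 - a \<or> (a' \<le> y k \<and> y k \<le> 1 - a')"
    if k: "k \<in> Vx n x" for k
  proof -
    have b: "0 \<le> y k" "y k \<le> 1" using yb k by auto
    have "0 \<le> lvl (y k)" "lvl (y k) \<le> 1/2" using b unfolding lvl_def by (auto simp: min_def)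
    then consider "lvl (y k) = 0" | "lvl (y k) = 1/2" | "lvl (y k) \<in> ?D"
      using k unfolding Dset_def by fastforce
    then show ?thesis
    proof cases
      case 1 then show ?thesis using b by (auto simp: lvl_def min_def split: if_splits)
    next
      case 2 then show ?thesis using b a'_le by (auto simp: lvl_def min_def split: if_splits)
    next
      case 3
      have "a \<le> lvl (y k)" using amin 3 by auto
      moreover have "lvl (y k) = a \<or> a' \<le> lvl (y k)" using a'min[OF 3] \<open>a \<le> lvl (y k)\<close> by linarith
      ultimately show ?thesis by (auto simp: lvl_def min_def split: if_splits)
    qed
  qed
  define Wm where "Wm = (\<Sum>k\<in>{k\<in>Vx n x. y k = a}. real (w k))"
  define Wp where "Wp = (\<Sum>k\<in>{k\<in>Vx n x. y k = 1 - a}. real (w k))"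
  define t where "t = (if Wp \<le> Wm then 0 else a')"
  have t_bnd: "0 \<le> t" "t \<le> a'" using a_lt a_bnd unfolding t_def by auto
  define y' where "y' = (\<lambda>k. if y k = a then t else if y k = 1 - a then 1 - t else y k)"
  have a_ne: "a \<noteq> 1 - a" using a_bnd by auto
  have feas: "lp_feasible n E x y'"
    unfolding lp_feasible_def
  proof (rule conjI; intro ballI)
    fix e assume e: "e \<in> Ex E x"
    then have eE: "e \<in> E" by (auto simp: Ex_def)
    obtain i j where ij: "e = {i,j}" "i \<noteq> j" using edge_two[OF vi eE] by metis
    have sub: "e \<subseteq> Vx n x" using Ex_sub_Vx[OF vi e] .
    have s: "y i + y j \<ge> 1" using fe e ij unfolding lp_feasible_def by auto
    have ci: "y i = 0 \<or> y i = 1 \<or> y i = a \<or> y i = 1 - a \<or> (a' \<le> y i \<and> y i \<le> 1 - a')"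
      using cases sub ij by auto
    have cj: "y j = 0 \<or> y j = 1 \<or> y j = a \<or> y j = 1 - a \<or> (a' \<le> y j \<and> y j \<le> 1 - a')"
      using cases sub ij by auto
    have "y' i + y' j \<ge> 1"
      using ci cj s t_bnd a_bnd a_lt a'_le unfolding y'_def by (auto split: if_splits)
    then show "1 \<le> sum y' e" using ij by simp
  next
    fix k assume k: "k \<in> Vx n x"
    show "0 \<le> y' k \<and> y' k \<le> 1" using yb[OF k] t_bnd a_bnd a_lt a'_le unfolding y'_def by auto
  qed
  have pt: "real (w k) * y' k = real (w k) * y k + (t - a) * (if y k = a then real (w k) else 0)
             - (t - a) * (if y k = 1 - a then real (w k) else 0)" for k
  proof -
    consider "y k = a" | "y k = 1 - a" | "y k \<noteq> a" "y k \<noteq> 1 - a" by blast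
    then show ?thesis
    proof cases
      case 1 then show ?thesis unfolding y'_def using a_ne by (simp add: algebra_simps)
    next
      case 2 then have "y' k = 1 - t" unfolding y'_def using a_ne by auto
      then show ?thesis using 2 a_ne by (simp add: right_diff_distrib left_diff_distrib)
    next
      case 3 then show ?thesis unfolding y'_def by simp
    qed
  qed
  have obj_eq: "lp_obj n w x y' = lp_obj n w x y + (t - a) * (Wm - Wp)"
  proof -
    have "lp_obj n w x y' = (\<Sum>k\<in>Vx n x. real (w k) * y k + (t - a) * (if y k = a then real (w k) else 0)
             - (t - a) * (if y k = 1 - a then real (w k) else 0))"
      unfolding lp_obj_def using pt by (intro sum.cong) auto
    also have "\<dots> = lp_obj n w x y + (t - a) * (\<Sum>k\<in>Vx n x. (if y k = a then real (w k) else 0))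
       - (t - a) * (\<Sum>k\<in>Vx n x. (if y k = 1 - a then real (w k) else 0))"
      unfolding lp_obj_def by (simp add: sum.distrib sum_subtractf sum_distrib_left)
    also have "(\<Sum>k\<in>Vx n x. (if y k = a then real (w k) else 0)) = Wm"
      unfolding Wm_def by (simp add: sum.inter_filter[symmetric] Vx_finite)
    also have "(\<Sum>k\<in>Vx n x. (if y k = 1 - a then real (w k) else 0)) = Wp"
      unfolding Wp_def by (simp add: sum.inter_filter[symmetric] Vx_finite)
    finally show ?thesis by (simp add: algebra_simps)
  qed
  have obj_le: "lp_obj n w x y' \<le> lp_obj n w x y"
  proof -
    have "(t - a) * (Wm - Wp) \<le> 0"
    proof (cases "Wp \<le> Wm")
      case True then show ?thesis using a_bnd unfolding t_def by (simp add: mult_nonpos_nonneg)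
    next
      case False then show ?thesis using a_lt unfolding t_def by (simp add: mult_nonneg_nonpos)
    qed
    then show ?thesis using obj_eq by simp
  qed
  have sub: "Dset n x y' \<subseteq> ?D - {a}"
  proof
    fix d assume "d \<in> Dset n x y'"
    then obtain k where k: "k \<in> Vx n x" "d = lvl (y' k)" "0 < d" "d < 1/2" unfolding Dset_def by auto
    show "d \<in> ?D - {a}"
    proof (cases "y k = a \<or> y k = 1 - a")
      case True
      then have "d = t" using k t_bnd a'_le unfolding y'_def lvl_def by (auto simp: min_def)
      then have "t = a'" "a' < 1/2" using k t_def by (auto split: if_splits)
      then show ?thesis using a'_mem \<open>d = t\<close> by auto
    next
      case False
      then have "y' k = y k" unfolding y'_def by auto
      moreover have "lvl (y k) \<noteq> a" using False unfolding lvl_def by (auto simp: min_def)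
      ultimately show ?thesis using k unfolding Dset_def by auto
    qed
  qed
  then have "Dset n x y' \<subset> ?D" using aD by blast
  then show ?thesis using feas obj_le by blast
qed

lemma round_all:
  assumes vi: "valid_instance n E w"
  shows "lp_feasible n E x y \<Longrightarrow> \<exists>y'. lp_feasible n E x y' \<and> lp_obj n w x y' \<le> lp_obj n w x y \<and> Dset n x y' = {}"
proof (induct "card (Dset n x y)" arbitrary: y rule: less_induct)
  case less
  show ?case
  proof (cases "Dset n x y = {}")
    case True then show ?thesis using less by blast
  next
    case False
    then obtain y1 where y1: "lp_feasible n E x y1" "lp_obj n w x y1 \<le> lp_obj n w x y" "Dset n x y1 \<subset> Dset n x y"
      using round_step[OF vi less(2)] by blast
    have "card (Dset n x y1) < card (Dset n x y)" using y1(3) Dset_finite psubset_card_mono by blast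
    then obtain y2 where "lp_feasible n E x y2" "lp_obj n w x y2 \<le> lp_obj n w x y1" "Dset n x y2 = {}"
      using less(1) y1(1) by blast
    then show ?thesis using y1 by auto
  qed
qed

lemma Dset_empty_half:
  assumes "lp_feasible n E x y" "Dset n x y = {}" "i \<in> Vx n x"
  shows "y i = 0 \<or> y i = 1/2 \<or> y i = 1"
proof -
  have b: "0 \<le> y i" "y i \<le> 1" using assms by (auto simp: lp_feasible_def)
  have "\<not> (0 < lvl (y i) \<and> lvl (y i) < 1/2)" using assms unfolding Dset_def by blast
  then show ?thesis using b unfolding lvl_def by (auto simp: min_def split: if_splits)
qed



definition halfint :: "nat \<Rightarrow> (nat \<Rightarrow> bool) \<Rightarrow> (nat \<Rightarrow> real) \<Rightarrow> bool" where
  "halfint n x y \<longleftrightarrow> (\<forall>i\<in>Vx n x. y i \<in> {0, 1/2, 1}) \<and> (\<forall>i. i \<notin> Vx n x \<longrightarrow> y i = 0)"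

lemma halfint_finite: "finite {y. halfint n x y}"
proof -
  let ?g = "\<lambda>f i. if i \<in> Vx n x then f i else (0::real)"
  have "{y. halfint n x y} \<subseteq> ?g ` (PiE (Vx n x) (\<lambda>_. {0, 1/2, 1}))"
  proof
    fix y assume "y \<in> {y. halfint n x y}"
    then have h: "halfint n x y" by simp
    have "y = ?g (restrict y (Vx n x))" using h unfolding halfint_def by (auto simp: fun_eq_iff)
    moreover have "restrict y (Vx n x) \<in> PiE (Vx n x) (\<lambda>_. {0, 1/2, 1})"
      using h unfolding halfint_def by auto
    ultimately show "y \<in> ?g ` (PiE (Vx n x) (\<lambda>_. {0, 1/2, 1}))" by blast
  qed
  moreover have "finite (PiE (Vx n x) (\<lambda>_. {0::real, 1/2, 1}))"
    by (intro finite_PiE Vx_finite) auto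
  ultimately show ?thesis using finite_subset by blast
qed

lemma obj_cong: "(\<And>i. i \<in> Vx n x \<Longrightarrow> y i = y' i) \<Longrightarrow> lp_obj n w x y = lp_obj n w x y'"
  unfolding lp_obj_def by (intro sum.cong) auto

lemma round_halfint:
  assumes vi: "valid_instance n E w" and fe: "lp_feasible n E x y"
  shows "\<exists>y'. lp_feasible n E x y' \<and> lp_obj n w x y' \<le> lp_obj n w x y \<and> halfint n x y'"
proof -
  obtain y1 where y1: "lp_feasible n E x y1" "lp_obj n w x y1 \<le> lp_obj n w x y" "Dset n x y1 = {}"
    using round_all[OF vi fe] by blast
  define y2 where "y2 = (\<lambda>i. if i \<in> Vx n x then y1 i else 0)"
  have "lp_feasible n E x y2" using y1(1) feasible_cong[OF vi, of x y1 y2] unfolding y2_def by auto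
  moreover have "lp_obj n w x y2 = lp_obj n w x y1" unfolding y2_def by (intro obj_cong) auto
  moreover have "halfint n x y2" unfolding halfint_def y2_def using Dset_empty_half[OF y1(1) y1(3)] by auto
  ultimately show ?thesis using y1(2) by auto
qed

lemma one_feasible:
  assumes vi: "valid_instance n E w"
  shows "lp_feasible n E x (\<lambda>i. if i \<in> Vx n x then 1 else 0)"
  unfolding lp_feasible_def
proof (rule conjI; intro ballI)
  fix e assume e: "e \<in> Ex E x"
  then have eE: "e \<in> E" by (auto simp: Ex_def)
  obtain i j where ij: "e = {i,j}" "i \<noteq> j" using edge_two[OF vi eE] by metis
  have "e \<subseteq> Vx n x" using Ex_sub_Vx[OF vi e] .
  then show "1 \<le> (\<Sum>i\<in>e. if i \<in> Vx n x then 1 else (0::real))" using ij by auto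
qed auto

lemma LP_attained:
  assumes vi: "valid_instance n E w"
  shows "\<exists>y. lp_feasible n E x y \<and> lp_obj n w x y = LP n E w x \<and> halfint n x y"
proof -
  define H where "H = {y. halfint n x y \<and> lp_feasible n E x y}"
  have fH: "finite H" unfolding H_def using halfint_finite by (rule finite_subset[rotated]) auto
  obtain y0 where y0: "lp_feasible n E x y0" "halfint n x y0"
    using round_halfint[OF vi one_feasible[OF vi]] by blast
  have neH: "H \<noteq> {}" using y0 H_def by auto
  have "Min (lp_obj n w x ` H) \<in> lp_obj n w x ` H" using fH neH by (intro Min_in) auto
  then obtain ys where ys1: "ys \<in> H" "lp_obj n w x ys = Min (lp_obj n w x ` H)" by auto
  have ys: "ys \<in> H" "\<And>y. y \<in> H \<Longrightarrow> lp_obj n w x ys \<le> lp_obj n w x y"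
    using ys1 fH by auto
  have low: "lp_obj n w x ys \<le> lp_obj n w x y" if fy: "lp_feasible n E x y" for y
  proof -
    obtain y' where "lp_feasible n E x y'" "lp_obj n w x y' \<le> lp_obj n w x y" "halfint n x y'"
      using round_halfint[OF vi fy] by blast
    then show ?thesis using ys(2)[of y'] H_def by auto
  qed
  have "LP n E w x = lp_obj n w x ys"
    unfolding LP_def using ys(1) H_def low by (intro cInf_eq_minimum) auto
  then show ?thesis using ys(1) H_def by auto
qed

lemma LP_half:
  assumes vi: "valid_instance n E w"
  shows "\<exists>k::nat. LP n E w x = real k / 2"
proof -
  obtain y where y: "lp_feasible n E x y" "lp_obj n w x y = LP n E w x" "halfint n x y"
    using LP_attained[OF vi] by blast
  define m where "m = (\<lambda>i. if y i = 0 then 0 else if y i = 1/2 then 1 else (2::nat))"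
  have "\<And>i. i \<in> Vx n x \<Longrightarrow> y i = real (m i) / 2" using y(3) unfolding halfint_def m_def by auto
  then have "lp_obj n w x y = (\<Sum>i\<in>Vx n x. real (w i * m i) / 2)"
    unfolding lp_obj_def by (intro sum.cong) auto
  also have "\<dots> = real (\<Sum>i\<in>Vx n x. w i * m i) / 2" by (simp add: sum_divide_distrib)
  finally show ?thesis using y(2) by metis
qed

abbreviation Z :: "nat \<Rightarrow> bool" where "Z \<equiv> (\<lambda>_. False)"

lemma Vx_Z: "Vx n Z = {..<n}" by (auto simp: Vx_def)
lemma Ex_Z: "Ex E Z = E" by (auto simp: Ex_def)

lemma LP_nonneg: "valid_instance n E w \<Longrightarrow> 0 \<le> LP n E w x"
  using LP_attained obj_nonneg by metis

lemma Cost_split: "(\<Sum>i<n. f i) = (\<Sum>i\<in>{i. i < n \<and> x i}. f i) + (\<Sum>i\<in>Vx n x. f i)" for f :: "nat \<Rightarrow> real"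
proof -
  have "{..<n} = {i. i < n \<and> x i} \<union> Vx n x" by (auto simp: Vx_def)
  moreover have "{i. i < n \<and> x i} \<inter> Vx n x = {}" by (auto simp: Vx_def)
  ultimately show ?thesis by (simp add: sum.union_disjoint Vx_finite)
qed

lemma LP_lower:
  assumes vi: "valid_instance n E w"
  shows "LP n E w Z \<le> LP n E w x + real (Cost n w x)"
proof -
  obtain y where y: "lp_feasible n E x y" "lp_obj n w x y = LP n E w x" "halfint n x y"
    using LP_attained[OF vi] by blast
  define y0 where "y0 = (\<lambda>i. if x i then 1 else y i)"
  have yb: "\<And>i. i \<in> Vx n x \<Longrightarrow> 0 \<le> y i \<and> y i \<le> 1" using y(1) by (auto simp: lp_feasible_def)
  have fe: "lp_feasible n E Z y0"
    unfolding lp_feasible_def Ex_Z Vx_Z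
  proof (rule conjI; intro ballI)
    fix e assume eE: "e \<in> E"
    obtain i j where ij: "e = {i,j}" "i \<noteq> j" "i < n" "j < n" using edge_two[OF vi eE] by metis
    have nn: "0 \<le> y0 k" if "k < n" for k using yb[of k] that unfolding y0_def Vx_def by auto
    show "1 \<le> sum y0 e"
    proof (cases "x i \<or> x j")
      case True
      then show ?thesis using ij nn[OF ij(3)] nn[OF ij(4)] unfolding y0_def by (auto split: if_splits)
    next
      case False
      then have "e \<in> Ex E x" using eE ij by (auto simp: Ex_def)
      then have "1 \<le> sum y e" using y(1) by (auto simp: lp_feasible_def)
      moreover have "sum y0 e = sum y e" using False ij unfolding y0_def by auto
      ultimately show ?thesis by simp
    qed
  next
    fix i assume "i \<in> {..<n}"
    then show "0 \<le> y0 i \<and> y0 i \<le> 1" using yb[of i] unfolding y0_def Vx_def by auto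
  qed
  have "lp_obj n w Z y0 = (\<Sum>i\<in>{i. i < n \<and> x i}. real (w i) * y0 i) + (\<Sum>i\<in>Vx n x. real (w i) * y0 i)"
    unfolding lp_obj_def Vx_Z by (rule Cost_split)
  also have "(\<Sum>i\<in>{i. i < n \<and> x i}. real (w i) * y0 i) = real (Cost n w x)"
    unfolding Cost_def y0_def by simp
  also have "(\<Sum>i\<in>Vx n x. real (w i) * y0 i) = lp_obj n w x y"
    unfolding lp_obj_def y0_def Vx_def by (intro sum.cong) auto
  finally have "lp_obj n w Z y0 = real (Cost n w x) + LP n E w x" using y(2) by simp
  then show ?thesis using LP_le_obj[OF fe, of w] by simp
qed

lemma LP_upper:
  assumes vi: "valid_instance n E w"
  shows "LP n E w x \<le> LP n E w Z"
proof -
  obtain y where y: "lp_feasible n E Z y" "lp_obj n w Z y = LP n E w Z" "halfint n Z y"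
    using LP_attained[OF vi] by blast
  have fe: "lp_feasible n E x y"
    using y(1) unfolding lp_feasible_def Ex_Z Vx_Z by (auto simp: Ex_def Vx_def)
  have "lp_obj n w x y \<le> lp_obj n w Z y"
    unfolding lp_obj_def Vx_Z using y(1) unfolding lp_feasible_def Vx_Z
    by (intro sum_mono2) (auto simp: Vx_def)
  then show ?thesis using LP_le_obj[OF fe, of w] y(2) by simp
qed

lemma OPT_attained:
  assumes vi: "valid_instance n E w"
  shows "\<exists>S. is_vertex_cover n E S \<and> OPT n E w = (\<Sum>i\<in>S. w i)"
proof -
  let ?A = "{(\<Sum>i\<in>S. w i) | S. is_vertex_cover n E S}"
  have "?A \<subseteq> (\<lambda>S. \<Sum>i\<in>S. w i) ` Pow {..<n}" by (auto simp: is_vertex_cover_def)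
  then have "finite ?A" using finite_subset by blast
  moreover have "is_vertex_cover n E {..<n}"
    unfolding is_vertex_cover_def
  proof (intro conjI ballI)
    fix e assume e: "e \<in> E"
    then have "card e = 2" "e \<subseteq> {..<n}" using vi by (auto simp: valid_instance_def)
    then have "e \<noteq> {}" by auto
    then show "e \<inter> {..<n} \<noteq> {}" using \<open>e \<subseteq> {..<n}\<close> by blast
  qed simp
  then have "?A \<noteq> {}" by blast
  ultimately have "OPT n E w \<in> ?A" unfolding OPT_def using Min_in by blast
  then show ?thesis by auto
qed

lemma OPT_pos:
  assumes vi: "valid_instance n E w" and ne: "E \<noteq> {}"
  shows "1 \<le> OPT n E w"
proof -
  obtain S where S: "is_vertex_cover n E S" "OPT n E w = (\<Sum>i\<in>S. w i)" using OPT_attained[OF vi] by blast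
  obtain e where "e \<in> E" using ne by blast
  then obtain i where i: "i \<in> S" using S(1) unfolding is_vertex_cover_def by blast
  have "i < n" "finite S" using S(1) i unfolding is_vertex_cover_def by (auto intro: finite_subset)
  then have "w i \<le> (\<Sum>i\<in>S. w i)" "0 < w i" using i vi by (auto simp: valid_instance_def intro: member_le_sum)
  then show ?thesis using S(2) by linarith
qed

lemma LP_le_OPT:
  assumes vi: "valid_instance n E w"
  shows "LP n E w Z \<le> real (OPT n E w)"
proof -
  obtain S where S: "is_vertex_cover n E S" "OPT n E w = (\<Sum>i\<in>S. w i)" using OPT_attained[OF vi] by blast
  define y where "y = (\<lambda>i. if i \<in> S then 1 else (0::real))"
  have Sn: "S \<subseteq> {..<n}" using S(1) by (auto simp: is_vertex_cover_def)
  have fe: "lp_feasible n E Z y"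
    unfolding lp_feasible_def Ex_Z Vx_Z
  proof (rule conjI; intro ballI)
    fix e assume eE: "e \<in> E"
    obtain i j where ij: "e = {i,j}" "i \<noteq> j" "i < n" "j < n" using edge_two[OF vi eE] by metis
    have "e \<inter> S \<noteq> {}" using S(1) eE by (auto simp: is_vertex_cover_def)
    then show "1 \<le> sum y e" using ij unfolding y_def by auto
  qed (auto simp: y_def)
  have "lp_obj n w Z y = (\<Sum>i\<in>S. real (w i))"
  proof -
    have "lp_obj n w Z y = (\<Sum>i\<in>{..<n}. if i \<in> S then real (w i) else 0)"
      unfolding lp_obj_def Vx_Z y_def by (intro sum.cong) auto
    also have "\<dots> = (\<Sum>i\<in>{i\<in>{..<n}. i \<in> S}. real (w i))" by (rule sum.inter_filter[symmetric]) simp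
    also have "{i\<in>{..<n}. i \<in> S} = S" using Sn by auto
    finally show ?thesis .
  qed
  then show ?thesis using LP_le_obj[OF fe, of w] S(2) by simp
qed

definition online :: "nat \<Rightarrow> nat set set \<Rightarrow> (nat \<Rightarrow> nat) \<Rightarrow> (nat \<Rightarrow> bool) \<Rightarrow> bool" where
  "online n E w x \<longleftrightarrow> LP n E w x = LP n E w Z - real (Cost n w x)"

lemma good_online: "good_solution n E w x \<Longrightarrow> online n E w x"
  by (simp add: good_solution_def online_def)

lemma Cost_le_LPZ:
  assumes "valid_instance n E w" "online n E w x" shows "real (Cost n w x) \<le> LP n E w Z"
  using assms LP_nonneg[OF assms(1), of x] unfolding online_def by linarith

lemma key_extend:
  assumes vi: "valid_instance n E w" and on: "online n E w x" and ng: "\<not> good_solution n E w x"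
  shows "\<exists>v<n. \<not> x v \<and> online n E w (x(v := True))"
proof -
  obtain y where y: "lp_feasible n E x y" "lp_obj n w x y = LP n E w x" "halfint n x y"
    using LP_attained[OF vi] by blast
  show ?thesis
  proof (cases "\<exists>v\<in>Vx n x. y v = 1")
    case True
    then obtain v where v: "v \<in> Vx n x" "y v = 1" by blast
    have vn: "v < n" "\<not> x v" using v by (auto simp: Vx_def)
    let ?x' = "x(v := True)"
    have Vx': "Vx n ?x' = Vx n x - {v}" by (auto simp: Vx_def)
    have fe: "lp_feasible n E ?x' y"
      using y(1) unfolding lp_feasible_def Vx' by (auto simp: Ex_def)
    have "lp_obj n w ?x' y = lp_obj n w x y - real (w v)"
      unfolding lp_obj_def Vx' using v by (simp add: sum_diff1 Vx_finite)
    then have up: "LP n E w ?x' \<le> LP n E w x - real (w v)" using LP_le_obj[OF fe, of w] y(2) by simp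
    have "{i. i < n \<and> ?x' i} = insert v {i. i < n \<and> x i}" using vn by auto
    then have c: "Cost n w ?x' = Cost n w x + w v" unfolding Cost_def using vn by simp
    have "LP n E w Z \<le> LP n E w ?x' + real (Cost n w ?x')" by (rule LP_lower[OF vi])
    then have "LP n E w ?x' = LP n E w Z - real (Cost n w ?x')"
      using up on c unfolding online_def by simp
    then show ?thesis using vn unfolding online_def by blast
  next
    case False
    have "good_solution n E w x"
      unfolding good_solution_def
    proof (intro conjI exI[of _ y])
      show "LP n E w x = LP n E w Z - real (Cost n w x)" using on unfolding online_def .
      show "lp_optimal n E w x y" using y unfolding lp_optimal_def by auto
      show "\<forall>i\<in>Vx n x. nonisolated E x i \<longrightarrow> y i = 1/2"
      proof (intro ballI impI)
        fix i assume i: "i \<in> Vx n x" and ni: "nonisolated E x i"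
        then obtain e where e: "e \<in> Ex E x" "i \<in> e" unfolding nonisolated_def by blast
        then have eE: "e \<in> E" by (auto simp: Ex_def)
        obtain a b where ab: "e = {a,b}" "a \<noteq> b" using edge_two[OF vi eE] by metis
        obtain j where j: "e = {i,j}" "i \<noteq> j" using ab e(2) by auto
        have jV: "j \<in> Vx n x" using Ex_sub_Vx[OF vi e(1)] j by auto
        have "1 \<le> y i + y j" using y(1) e(1) j unfolding lp_feasible_def by auto
        moreover have "y i \<in> {0, 1/2}" "y j \<in> {0, 1/2}" using y(3) False i jV unfolding halfint_def by auto
        ultimately show "y i = 1/2" by auto
      qed
    qed
    then show ?thesis using ng by blast
  qed
qed



lemma expectation_bind_pmf_bdd:
  fixes f :: "'b \<Rightarrow> real"
  assumes "\<And>x. \<bar>f x\<bar> \<le> B"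
  shows "measure_pmf.expectation (bind_pmf M N) f = measure_pmf.expectation M (\<lambda>x. measure_pmf.expectation (N x) f)"
  unfolding measure_pmf_bind
  by (rule integral_bind[where K="count_space UNIV" and B=B and B'=1])
     (auto simp: assms measure_pmf.emeasure_space_1 measure_pmf_in_subprob_algebra
           intro: measure_pmf.finite_measure_axioms)

lemma set_mutate: "x' \<in> set_pmf (mutate n E x) \<Longrightarrow> i \<ge> n \<Longrightarrow> x' i = x i"
proof -
  assume x': "x' \<in> set_pmf (mutate n E x)" and i: "i \<ge> n"
  then obtain b fl where fl: "fl \<in> set_pmf (Pi_pmf {..<n} False (\<lambda>i. bernoulli_pmf
            (if b \<and> nonisolated E x i then 1/2 else 1 / real n)))" and "x' = (\<lambda>i. x i \<noteq> fl i)"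
    unfolding mutate_def by auto
  moreover have "fl i = False" using set_Pi_pmf_subset[of "{..<n}" False] fl i by fastforce
  ultimately show ?thesis by simp
qed

lemma one_minus_pow: assumes "n \<ge> 2" shows "(1 - 1 / real n) ^ (n - 1) \<ge> 1/3"
proof -
  obtain m where nm: "n = Suc m" and m1: "m \<ge> 1" using assms by (cases n) auto
  have mr: "real m \<ge> 1" using m1 by simp
  have "(1 + 1 / real m) \<le> exp (1 / real m)" using exp_ge_add_one_self[of "1/real m"] by simp
  then have "(1 + 1 / real m) ^ m \<le> exp (1 / real m) ^ m" by (intro power_mono) (use mr in auto)
  also have "\<dots> = exp (real m * (1 / real m))" by (simp add: exp_of_nat_mult[symmetric])
  also have "\<dots> = exp 1" using mr by simp
  also have "\<dots> \<le> 3" by (rule exp_le)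
  finally have A: "(1 + 1 / real m) ^ m \<le> 3" .
  have "(1 - 1 / real (Suc m)) = 1 / (1 + 1 / real m)" using mr by (simp add: field_simps)
  then have "(1 - 1 / real (Suc m)) ^ m = 1 / (1 + 1 / real m) ^ m" by (simp add: power_one_over)
  moreover have "(1 + 1 / real m) ^ m > 0" using mr by (intro zero_less_power) (simp add: add_pos_nonneg)
  ultimately show ?thesis using A nm by (simp add: field_simps)
qed

lemma pmf_mutate_flip:
  assumes n: "n \<ge> 2" and v: "v < n"
  shows "pmf (mutate n E x) (x(v := \<not> x v)) \<ge> 1 / (6 * real n)"
proof -
  let ?M = "\<lambda>b. Pi_pmf {..<n} False (\<lambda>i. bernoulli_pmf (if b \<and> nonisolated E x i then 1/2 else 1 / real n))"
  let ?g = "\<lambda>fl i. x i \<noteq> fl i"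
  let ?fl = "\<lambda>i. i = v"
  have g: "?g ?fl = x(v := \<not> x v)" by auto
  have pm: "pmf (map_pmf ?g (?M False)) (x(v := \<not> x v)) \<ge> pmf (?M False) ?fl"
  proof -
    have "pmf (map_pmf ?g (?M False)) (x(v := \<not> x v)) = measure_pmf.prob (?M False) (?g -` {x(v := \<not> x v)})"
      by (rule pmf_map)
    also have "\<dots> \<ge> measure_pmf.prob (?M False) {?fl}"
      using g by (intro measure_pmf.finite_measure_mono) auto
    finally show ?thesis by (simp add: measure_pmf_single)
  qed
  have n0: "0 < real n" "1 / real n \<le> 1" using n by auto
  have "pmf (?M False) ?fl = (\<Prod>i\<in>{..<n}. pmf (bernoulli_pmf (1 / real n)) (i = v))"
    using v by (subst pmf_Pi) auto
  also have "\<dots> = (\<Prod>i\<in>{..<n}. if i = v then 1 / real n else 1 - 1 / real n)"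
    using n0 by (intro prod.cong) auto
  also have "\<dots> = 1 / real n * (1 - 1 / real n) ^ (n - 1)"
  proof -
    have "(\<Prod>i\<in>{..<n}. if i = v then 1 / real n else 1 - 1 / real n)
        = (1 / real n) * (\<Prod>i\<in>{..<n} - {v}. if i = v then 1 / real n else 1 - 1 / real n)"
      using v by (subst prod.remove[of _ v]) auto
    also have "(\<Prod>i\<in>{..<n} - {v}. if i = v then 1 / real n else 1 - 1 / real n) = (1 - 1 / real n) ^ (n - 1)"
      using v by (simp add: prod_constant)
    finally show ?thesis .
  qed
  finally have pf: "pmf (?M False) ?fl = 1 / real n * (1 - 1 / real n) ^ (n - 1)" .
  have "pmf (mutate n E x) (x(v := \<not> x v)) = measure_pmf.expectation (bernoulli_pmf (1/2))
          (\<lambda>b. pmf (map_pmf ?g (?M b)) (x(v := \<not> x v)))"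
    unfolding mutate_def by (rule pmf_bind)
  also have "\<dots> = 1/2 * pmf (map_pmf ?g (?M True)) (x(v := \<not> x v)) + 1/2 * pmf (map_pmf ?g (?M False)) (x(v := \<not> x v))"
    by (simp add: integral_bernoulli_pmf)
  also have "\<dots> \<ge> 1/2 * pmf (?M False) ?fl"
    using pm pmf_nonneg[of "map_pmf ?g (?M True)" "x(v := \<not> x v)"] by linarith
  finally have "pmf (mutate n E x) (x(v := \<not> x v)) \<ge> 1/2 * (1 / real n * (1 - 1 / real n) ^ (n - 1))"
    using pf by simp
  moreover have "1/2 * (1 / real n * (1 - 1 / real n) ^ (n - 1)) \<ge> 1/2 * (1 / real n * (1/3))"
    using one_minus_pow[OF n] n0 by (intro mult_left_mono) auto
  ultimately show ?thesis by simp
qed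



definition valid_pt :: "nat \<Rightarrow> (nat \<Rightarrow> bool) \<Rightarrow> bool" where
  "valid_pt n x \<longleftrightarrow> (\<forall>i\<ge>n. \<not> x i)"

definition Inv :: "nat \<Rightarrow> nat set set \<Rightarrow> (nat \<Rightarrow> nat) \<Rightarrow> (nat \<Rightarrow> bool) set \<Rightarrow> bool" where
  "Inv n E w P \<longleftrightarrow> finite P \<and> P \<noteq> {} \<and> (\<forall>x\<in>P. valid_pt n x) \<and>
     (\<forall>a\<in>P. \<forall>b\<in>P. a \<noteq> b \<longrightarrow> \<not> weakly_dom n E w a b)"

lemma wd_refl: "weakly_dom n E w a a" by (simp add: weakly_dom_def)

lemma update_sub: "semo_update n E w P x' \<subseteq> insert x' P"
  unfolding semo_update_def by auto

lemma update_inv: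
  assumes "Inv n E w P" "valid_pt n x'" shows "Inv n E w (semo_update n E w P x')"
proof (cases "\<exists>y\<in>P. weakly_dom n E w y x'")
  case True then show ?thesis using assms by (simp add: semo_update_def)
next
  case False
  then have "x' \<notin> P" using wd_refl by blast
  then show ?thesis using assms False unfolding semo_update_def Inv_def by auto
qed

lemma mutate_valid: "valid_pt n x \<Longrightarrow> x' \<in> set_pmf (mutate n E x) \<Longrightarrow> valid_pt n x'"
  unfolding valid_pt_def using set_mutate by metis

lemma Cost_le_S: "Cost n w x \<le> (\<Sum>i<n. w i)"
  unfolding Cost_def by (rule sum_mono2) auto

lemma Cost_zero:
  assumes vi: "valid_instance n E w" and "valid_pt n x" "Cost n w x = 0" shows "x = Z"
proof -
  have "\<And>i. i < n \<Longrightarrow> x i \<Longrightarrow> False"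
  proof -
    fix i assume i: "i < n" "x i"
    have "w i \<le> Cost n w x" unfolding Cost_def using i by (intro member_le_sum) auto
    then show False using vi i assms(3) by (auto simp: valid_instance_def)
  qed
  then show ?thesis using assms(2) unfolding valid_pt_def by (auto simp: fun_eq_iff) (meson not_le)
qed

lemma online_Z: "online n E w Z"
  by (simp add: online_def Cost_def)

lemma card_P:
  assumes vi: "valid_instance n E w" and inv: "Inv n E w P"
  shows "card P \<le> 2 * OPT n E w + 1"
proof -
  define g where "g = (\<lambda>x. nat \<lfloor>2 * LP n E w x\<rfloor>)"
  have gLP: "real (g x) = 2 * LP n E w x" for x
  proof -
    obtain k :: nat where "LP n E w x = real k / 2" using LP_half[OF vi] by blast
    then have "2 * LP n E w x = real k" by simp
    then show ?thesis unfolding g_def by simp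
  qed
  have inj: "inj_on g P"
  proof (rule inj_onI)
    fix a b assume ab: "a \<in> P" "b \<in> P" "g a = g b"
    then have "LP n E w a = LP n E w b" using gLP[of a] gLP[of b] by simp
    then have "weakly_dom n E w a b \<or> weakly_dom n E w b a" unfolding weakly_dom_def by auto
    moreover have "\<forall>a\<in>P. \<forall>b\<in>P. a \<noteq> b \<longrightarrow> \<not> weakly_dom n E w a b" using inv unfolding Inv_def by blast
    ultimately show "a = b" using ab(1,2) by metis
  qed
  have "g ` P \<subseteq> {..2 * OPT n E w}"
  proof
    fix k assume "k \<in> g ` P"
    then obtain x where "k = g x" by auto
    moreover have "LP n E w x \<le> real (OPT n E w)" using LP_upper[OF vi] LP_le_OPT[OF vi] order_trans by blast
    ultimately have "real k \<le> real (2 * OPT n E w)" using gLP[of x] by simp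
    then show "k \<in> {..2 * OPT n E w}" by simp
  qed
  then have "card (g ` P) \<le> 2 * OPT n E w + 1" using card_mono[of "{..2 * OPT n E w}"] by fastforce
  then show ?thesis using card_image[OF inj] by simp
qed

lemma online_cost_le:
  assumes vi: "valid_instance n E w" and on: "online n E w x" shows "Cost n w x \<le> OPT n E w"
  using Cost_le_LPZ[OF vi on] LP_le_OPT[OF vi] by linarith

lemma wd_online:
  assumes vi: "valid_instance n E w" and on: "online n E w x'" and wd: "weakly_dom n E w z x'"
  shows "online n E w z \<and> Cost n w z = Cost n w x'"
proof -
  have "LP n E w Z \<le> LP n E w z + real (Cost n w z)" by (rule LP_lower[OF vi])
  then show ?thesis using on wd unfolding online_def weakly_dom_def by simp
qed

lemma online_persist:
  assumes vi: "valid_instance n E w" and y: "y \<in> P" "online n E w y"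
  shows "y \<in> semo_update n E w P x'"
proof (cases "\<exists>z\<in>P. weakly_dom n E w z x'")
  case True then show ?thesis using y by (simp add: semo_update_def)
next
  case False
  have "\<not> weakly_dom n E w x' y"
  proof
    assume "weakly_dom n E w x' y"
    then have "online n E w x' \<and> Cost n w x' = Cost n w y" using wd_online[OF vi y(2)] by blast
    then have "weakly_dom n E w y x'" using \<open>weakly_dom n E w x' y\<close> y(2)
      unfolding weakly_dom_def online_def by simp
    then show False using False y by blast
  qed
  then show ?thesis using y False by (simp add: semo_update_def)
qed

lemma online_new:
  assumes vi: "valid_instance n E w" and on: "online n E w x'"
    and gt: "\<And>z. z \<in> P \<Longrightarrow> online n E w z \<Longrightarrow> Cost n w z < Cost n w x'"
  shows "x' \<in> semo_update n E w P x'"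
proof -
  have "\<not> (\<exists>z\<in>P. weakly_dom n E w z x')"
  proof
    assume "\<exists>z\<in>P. weakly_dom n E w z x'"
    then obtain z where "z \<in> P" "weakly_dom n E w z x'" by blast
    then show False using wd_online[OF vi on] gt by fastforce
  qed
  then show ?thesis by (simp add: semo_update_def)
qed

lemma cost_new:
  assumes lt: "\<And>z. z \<in> P \<Longrightarrow> Cost n w x' < Cost n w z"
  shows "x' \<in> semo_update n E w P x'"
proof -
  have "\<not> (\<exists>z\<in>P. weakly_dom n E w z x')" using lt unfolding weakly_dom_def by fastforce
  then show ?thesis by (simp add: semo_update_def)
qed

lemma cost_persist:
  assumes m: "m \<in> P" shows "\<exists>z\<in>semo_update n E w P x'. Cost n w z \<le> Cost n w m"
proof (cases "\<exists>z\<in>P. weakly_dom n E w z x'")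
  case True then show ?thesis using m by (auto simp: semo_update_def)
next
  case False
  show ?thesis
  proof (cases "weakly_dom n E w x' m")
    case True then show ?thesis using False by (auto simp: semo_update_def weakly_dom_def)
  next
    case F2: False then show ?thesis using False m by (auto simp: semo_update_def)
  qed
qed



lemma expect_drop:
  fixes g :: "'a \<Rightarrow> real" and M :: "'a pmf"
  assumes bnd: "\<And>z. \<bar>g z\<bar> \<le> B" and sup: "\<And>z. z \<in> set_pmf M \<Longrightarrow> g z \<le> U"
    and fin: "finite V" and inj: "inj_on pt V"
    and dv: "\<And>v. v \<in> V \<Longrightarrow> g (pt v) \<le> U - d v" and d0: "\<And>v. v \<in> V \<Longrightarrow> 0 \<le> d v"
    and q: "\<And>v. v \<in> V \<Longrightarrow> q \<le> pmf M (pt v)"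
  shows "measure_pmf.expectation M g \<le> U - q * (\<Sum>v\<in>V. d v)"
proof -
  define h where "h = (\<lambda>z. U - (\<Sum>v\<in>V. d v * indicator {pt v} z))"
  have ind_int: "integrable (measure_pmf M) (\<lambda>z. d v * indicator {pt v} z)" for v
    by (intro integrable_mult_right) (auto intro!: integrable_real_indicator simp: less_top[symmetric] measure_pmf.emeasure_finite)
  have hint: "integrable (measure_pmf M) h"
    unfolding h_def by (intro Bochner_Integration.integrable_diff Bochner_Integration.integrable_sum ind_int) auto
  have gint: "integrable (measure_pmf M) g"
    by (rule measure_pmf.integrable_const_bound[where B=B]) (auto simp: bnd)
  have le: "g z \<le> h z" if z: "z \<in> set_pmf M" for z
  proof (cases "z \<in> pt ` V")
    case True
    then obtain v0 where v0: "v0 \<in> V" "z = pt v0" by auto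
    have "(\<Sum>v\<in>V. d v * indicator {pt v} z) = (\<Sum>v\<in>V. if v = v0 then d v else 0)"
      using inj v0 by (intro sum.cong) (auto simp: indicator_def inj_on_def)
    also have "\<dots> = d v0" using v0 fin by simp
    finally show ?thesis unfolding h_def using dv[OF v0(1)] v0 by simp
  next
    case False
    then have "(\<Sum>v\<in>V. d v * indicator {pt v} z) = 0" by (intro sum.neutral) (auto simp: indicator_def)
    then show ?thesis unfolding h_def using sup[OF z] by simp
  qed
  have "measure_pmf.expectation M g \<le> measure_pmf.expectation M h"
    by (rule integral_mono_AE[OF gint hint]) (use le in \<open>auto simp: AE_measure_pmf_iff\<close>)
  also have "measure_pmf.expectation M h = U - (\<Sum>v\<in>V. d v * pmf M (pt v))"
  proof -
    have "measure_pmf.expectation M h = measure_pmf.expectation M (\<lambda>_. U) -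
            measure_pmf.expectation M (\<lambda>z. \<Sum>v\<in>V. d v * indicator {pt v} z)"
      unfolding h_def by (rule Bochner_Integration.integral_diff) (auto intro!: Bochner_Integration.integrable_sum ind_int)
    also have "measure_pmf.expectation M (\<lambda>z. \<Sum>v\<in>V. d v * indicator {pt v} z)
        = (\<Sum>v\<in>V. measure_pmf.expectation M (\<lambda>z. d v * indicator {pt v} z))"
      by (rule Bochner_Integration.integral_sum) (rule ind_int)
    also have "\<dots> = (\<Sum>v\<in>V. d v * pmf M (pt v))"
      by (intro sum.cong refl) (simp add: measure_pmf_single)
    finally show ?thesis by simp
  qed
  also have "(\<Sum>v\<in>V. d v * pmf M (pt v)) \<ge> (\<Sum>v\<in>V. q * d v)"
    using q d0 by (intro sum_mono) (metis mult.commute mult_left_mono)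
  then have "U - (\<Sum>v\<in>V. d v * pmf M (pt v)) \<le> U - q * (\<Sum>v\<in>V. d v)" by (simp add: sum_distrib_left)
  finally show ?thesis .
qed

definition cmin :: "nat \<Rightarrow> (nat \<Rightarrow> nat) \<Rightarrow> (nat \<Rightarrow> bool) set \<Rightarrow> nat" where
  "cmin n w P = Min (Cost n w ` P)"

definition lmax :: "nat \<Rightarrow> nat set set \<Rightarrow> (nat \<Rightarrow> nat) \<Rightarrow> (nat \<Rightarrow> bool) set \<Rightarrow> nat" where
  "lmax n E w P = Max (Cost n w ` {x\<in>P. online n E w x})"

definition Phi :: "nat \<Rightarrow> nat set set \<Rightarrow> (nat \<Rightarrow> nat) \<Rightarrow> (nat \<Rightarrow> bool) set \<Rightarrow> real" where
  "Phi n E w P = (if hit n E w P \<or> P = {} then 0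
     else if \<exists>x\<in>P. online n E w x then 2 ^ (OPT n E w - lmax n E w P)
     else 2 ^ OPT n E w * (1 + real (cmin n w P)))"

lemma Cost_img_finite: "finite (Cost n w ` A)"
  by (rule finite_subset[of _ "{..(\<Sum>i<n. w i)}"]) (auto intro: Cost_le_S)

lemma cmin_le: "x \<in> P \<Longrightarrow> cmin n w P \<le> Cost n w x"
  unfolding cmin_def using Cost_img_finite by (intro Min_le) auto

lemma cmin_in: "P \<noteq> {} \<Longrightarrow> \<exists>m\<in>P. cmin n w P = Cost n w m"
proof -
  assume "P \<noteq> {}"
  then have "cmin n w P \<in> Cost n w ` P" unfolding cmin_def using Cost_img_finite by (intro Min_in) auto
  then show ?thesis by auto
qed

lemma cmin_S: "P \<noteq> {} \<Longrightarrow> cmin n w P \<le> (\<Sum>i<n. w i)"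
  using cmin_in Cost_le_S by metis

lemma cmin_S_real: "P \<noteq> {} \<Longrightarrow> real (cmin n w P) \<le> (\<Sum>i<n. real (w i))"
  using cmin_S by (metis of_nat_le_iff of_nat_sum)

lemma lmax_ge: "x \<in> P \<Longrightarrow> online n E w x \<Longrightarrow> Cost n w x \<le> lmax n E w P"
  unfolding lmax_def using Cost_img_finite by (intro Max_ge) auto

lemma lmax_in: "x \<in> P \<Longrightarrow> online n E w x \<Longrightarrow> \<exists>m\<in>P. online n E w m \<and> lmax n E w P = Cost n w m"
proof -
  assume "x \<in> P" "online n E w x"
  then have "lmax n E w P \<in> Cost n w ` {x\<in>P. online n E w x}"
    unfolding lmax_def using Cost_img_finite by (intro Max_in) auto
  then show ?thesis by auto
qed

lemma Phi_nonneg: "0 \<le> Phi n E w P" unfolding Phi_def by auto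

lemma Phi_bound: "Phi n E w P \<le> 2 ^ OPT n E w * (1 + real (\<Sum>i<n. w i))"
proof -
  have "(2::real) ^ (OPT n E w - lmax n E w P) \<le> 2 ^ OPT n E w" by (intro power_increasing) auto
  also have "\<dots> \<le> 2 ^ OPT n E w * (1 + real (\<Sum>i<n. w i))" by (simp add: sum_nonneg)
  finally have A: "(2::real) ^ (OPT n E w - lmax n E w P) \<le> 2 ^ OPT n E w * (1 + real (\<Sum>i<n. w i))" .
  have "P \<noteq> {} \<Longrightarrow> (2::real) ^ OPT n E w * (1 + real (cmin n w P)) \<le> 2 ^ OPT n E w * (1 + real (\<Sum>i<n. w i))"
    using cmin_S_real[of P n w] by (intro mult_left_mono) auto
  then show ?thesis unfolding Phi_def using A by (auto simp: sum_nonneg)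
qed

lemma one_le_pw: "(1::real) \<le> 2 ^ k * (1 + real c)"
proof -
  have a: "1 \<le> (2::real) ^ k" by simp
  then have "1 \<le> (2::real) ^ k * 1" by simp
  also have "(2::real) ^ k * 1 \<le> 2 ^ k * (1 + real c)" by (intro mult_left_mono) auto
  finally show ?thesis .
qed

lemma Phi_ge1: "\<not> hit n E w P \<Longrightarrow> P \<noteq> {} \<Longrightarrow> 1 \<le> Phi n E w P"
  unfolding Phi_def using one_le_pw by auto

lemma Phi_abs: "\<bar>Phi n E w P\<bar> \<le> 2 ^ OPT n E w * (1 + real (\<Sum>i<n. w i))"
  using Phi_bound Phi_nonneg by (metis abs_of_nonneg)

lemma phi_mono:
  assumes vi: "valid_instance n E w" and inv: "Inv n E w P" and nh: "\<not> hit n E w P" and vx: "valid_pt n x'"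
  shows "Phi n E w (semo_update n E w P x') \<le> Phi n E w P"
proof -
  let ?P' = "semo_update n E w P x'"
  let ?L = "OPT n E w"
  have inv': "Inv n E w ?P'" by (rule update_inv[OF inv vx])
  have ne: "P \<noteq> {}" "?P' \<noteq> {}" using inv inv' by (auto simp: Inv_def)
  show ?thesis
  proof (cases "hit n E w ?P'")
    case True then show ?thesis by (simp add: Phi_def Phi_nonneg)
  next
    case nh': False
    show ?thesis
    proof (cases "\<exists>x\<in>P. online n E w x")
      case True
      then obtain y where y: "y \<in> P" "online n E w y" by blast
      obtain m where m: "m \<in> P" "online n E w m" "lmax n E w P = Cost n w m" using lmax_in[OF y] by blast
      have m': "m \<in> ?P'" using online_persist[OF vi m(1,2)] .
      have "lmax n E w P \<le> lmax n E w ?P'" using lmax_ge[OF m' m(2)] m(3) by simp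
      then have "(2::real) ^ (?L - lmax n E w ?P') \<le> 2 ^ (?L - lmax n E w P)"
        by (intro power_increasing) auto
      then show ?thesis using True m' m(2) nh nh' ne unfolding Phi_def by auto
    next
      case False
      show ?thesis
      proof (cases "\<exists>x\<in>?P'. online n E w x")
        case True
        have "(2::real) ^ (?L - lmax n E w ?P') \<le> 2 ^ ?L" by (intro power_increasing) auto
        also have "\<dots> \<le> 2 ^ ?L * (1 + real (cmin n w P))" by simp
        finally show ?thesis using True False nh nh' ne unfolding Phi_def by auto
      next
        case F2: False
        obtain m where m: "m \<in> P" "cmin n w P = Cost n w m" using cmin_in[OF ne(1)] by blast
        obtain z where z: "z \<in> ?P'" "Cost n w z \<le> Cost n w m" using cost_persist[OF m(1)] by blast
        have "cmin n w ?P' \<le> cmin n w P" using cmin_le[of z ?P' n w] z m(2) by simp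
        then show ?thesis using F2 False nh nh' ne unfolding Phi_def by auto
      qed
    qed
  qed
qed

lemma phi_half:
  assumes vi: "valid_instance n E w" and inv: "Inv n E w P" and nh: "\<not> hit n E w P"
    and y: "y \<in> P" "online n E w y" and on: "online n E w x'" and gt: "lmax n E w P < Cost n w x'"
  shows "Phi n E w (semo_update n E w P x') \<le> Phi n E w P / 2"
proof -
  let ?P' = "semo_update n E w P x'"
  let ?L = "OPT n E w"
  have x'in: "x' \<in> ?P'"
    using online_new[OF vi on] lmax_ge gt by (meson order.strict_trans1)
  have ne: "P \<noteq> {}" using inv by (auto simp: Inv_def)
  show ?thesis
  proof (cases "hit n E w ?P'")
    case True then show ?thesis by (simp add: Phi_def Phi_nonneg)
  next
    case nh': False
    obtain m where m: "m \<in> ?P'" "online n E w m" "lmax n E w ?P' = Cost n w m" using lmax_in[OF x'in on] by blast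
    have le: "lmax n E w ?P' \<le> ?L" using online_cost_le[OF vi m(2)] m(3) by simp
    have ge: "lmax n E w P < lmax n E w ?P'" using lmax_ge[OF x'in on] gt by simp
    define k where "k = ?L - lmax n E w ?P'"
    define j where "j = lmax n E w ?P' - Suc (lmax n E w P)"
    have kj: "?L - lmax n E w P = Suc (k + j)"
      using le ge unfolding k_def j_def by simp
    have "(2::real) ^ (?L - lmax n E w P) = 2 * 2 ^ k * 2 ^ j"
      unfolding kj by (simp add: power_add)
    moreover have "(1::real) \<le> 2 ^ j" by simp
    ultimately have "(2::real) ^ (?L - lmax n E w ?P') \<le> 2 ^ (?L - lmax n E w P) / 2"
      unfolding k_def[symmetric] by (simp add: mult_le_cancel_left1)
    then have "(2::real) ^ (?L - lmax n E w ?P') \<le> 2 ^ (?L - lmax n E w P) / 2"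
      by (simp add: mult_le_cancel_left1)
    then show ?thesis using y x'in on nh nh' ne unfolding Phi_def by auto
  qed
qed

lemma phi_drop:
  assumes vi: "valid_instance n E w" and inv: "Inv n E w P"
    and lt: "\<And>z. z \<in> P \<Longrightarrow> Cost n w x' < Cost n w z"
  shows "Phi n E w (semo_update n E w P x') \<le> 2 ^ OPT n E w * (1 + real (Cost n w x'))"
proof -
  let ?P' = "semo_update n E w P x'"
  let ?L = "OPT n E w"
  have x'in: "x' \<in> ?P'" by (rule cost_new[OF lt])
  have A: "(2::real) ^ (?L - lmax n E w ?P') \<le> 2 ^ ?L * (1 + real (Cost n w x'))"
  proof -
    have "(2::real) ^ (?L - lmax n E w ?P') \<le> 2 ^ ?L" by (intro power_increasing) auto
    also have "\<dots> \<le> 2 ^ ?L * (1 + real (Cost n w x'))" by simp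
    finally show ?thesis .
  qed
  have "cmin n w ?P' \<le> Cost n w x'" by (rule cmin_le[OF x'in])
  then show ?thesis using A x'in unfolding Phi_def by auto
qed



lemma Cost_add: "v < n \<Longrightarrow> \<not> x v \<Longrightarrow> Cost n w (x(v := True)) = Cost n w x + w v"
proof -
  assume a: "v < n" "\<not> x v"
  then have "{i. i < n \<and> (x(v := True)) i} = insert v {i. i < n \<and> x i}" by auto
  then show ?thesis unfolding Cost_def using a by simp
qed

lemma Cost_del: "v < n \<Longrightarrow> x v \<Longrightarrow> Cost n w (x(v := False)) + w v = Cost n w x"
proof -
  assume a: "v < n" "x v"
  then have "x = (x(v := False))(v := True)" by (auto simp: fun_eq_iff)
  then have "Cost n w x = Cost n w (x(v := False)) + w v" using Cost_add[of v n "x(v := False)" w] a by simp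
  then show ?thesis by simp
qed

lemma step_expect:
  assumes vi: "valid_instance n E w" and n2: "n \<ge> 2" and inv: "Inv n E w P" and nh: "\<not> hit n E w P"
  shows "measure_pmf.expectation (semo_step n E w P) (Phi n E w)
           \<le> (1 - 1 / (12 * real n * (2 * real (OPT n E w) + 1))) * Phi n E w P"
proof -
  let ?K = "2 ^ OPT n E w * (1 + real (\<Sum>i<n. w i)) :: real"
  let ?U = "Phi n E w P"
  let ?L = "OPT n E w"
  define F where "F = (\<lambda>x. measure_pmf.expectation (mutate n E x) (\<lambda>x'. Phi n E w (semo_update n E w P x')))"
  have finP: "finite P" and neP: "P \<noteq> {}" and vP: "\<And>x. x \<in> P \<Longrightarrow> valid_pt n x"
    using inv by (auto simp: Inv_def)
  have U0: "0 \<le> ?U" by (rule Phi_nonneg)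
  have nr: "real n \<ge> 2" using n2 by simp
  have Eq: "measure_pmf.expectation (semo_step n E w P) (Phi n E w) = (\<Sum>x\<in>P. F x) / real (card P)"
    unfolding semo_step_def F_def
    by (subst expectation_bind_pmf_bdd[where B="?K"], rule Phi_abs) (auto simp: integral_map_pmf integral_pmf_of_set finP neP)
  have Fle: "F x \<le> ?U" if x: "x \<in> P" for x
  proof -
    have "F x \<le> ?U - 0 * (\<Sum>v\<in>{}. (0::real))"
      unfolding F_def
      by (rule expect_drop[where B="?K" and V="{}" and pt="\<lambda>v. x"])
         (auto simp: Phi_abs simp del: of_nat_sum intro!: phi_mono[OF vi inv nh] mutate_valid[OF vP[OF x]])
    then show ?thesis by simp
  qed
  have mbnd: "\<And>x z. x \<in> P \<Longrightarrow> z \<in> set_pmf (mutate n E x) \<Longrightarrow> Phi n E w (semo_update n E w P z) \<le> ?U"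
    using phi_mono[OF vi inv nh] mutate_valid vP by blast
  have q: "\<And>x v. v < n \<Longrightarrow> 1 / (6 * real n) \<le> pmf (mutate n E x) (x(v := \<not> x v))"
    using pmf_mutate_flip[OF n2] by blast
  obtain m where m: "m \<in> P" "F m \<le> ?U - ?U / (12 * real n)"
  proof (cases "\<exists>x\<in>P. online n E w x")
    case True
    then obtain y where y: "y \<in> P" "online n E w y" by blast
    obtain m where m: "m \<in> P" "online n E w m" "lmax n E w P = Cost n w m" using lmax_in[OF y] by blast
    have ng: "\<not> good_solution n E w m" using nh m(1) unfolding hit_def by blast
    obtain v where v: "v < n" "\<not> m v" "online n E w (m(v := True))" using key_extend[OF vi m(2) ng] by blast
    have wv: "0 < w v" using vi v(1) by (auto simp: valid_instance_def)
    have flip: "m(v := \<not> m v) = m(v := True)" using v by simp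
    have "F m \<le> ?U - 1 / (6 * real n) * (\<Sum>v\<in>{v}. ?U / 2)"
      unfolding F_def
    proof (rule expect_drop[where B="?K" and V="{v}" and pt="\<lambda>v. m(v := \<not> m v)"])
      show "\<bar>Phi n E w (semo_update n E w P z)\<bar> \<le> ?K" for z by (rule Phi_abs)
      show "z \<in> set_pmf (mutate n E m) \<Longrightarrow> Phi n E w (semo_update n E w P z) \<le> ?U" for z
        using mbnd[OF m(1)] by blast
      show "u \<in> {v} \<Longrightarrow> Phi n E w (semo_update n E w P (m(u := \<not> m u))) \<le> ?U - ?U / 2" for u
        using phi_half[OF vi inv nh y v(3)] Cost_add[of v n m w, OF v(1,2)] m(3) wv flip by simp
      show "u \<in> {v} \<Longrightarrow> 1 / (6 * real n) \<le> pmf (mutate n E m) (m(u := \<not> m u))" for u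
        using q v(1) by simp
    qed (use U0 in auto)
    then have "F m \<le> ?U - ?U / (12 * real n)" by simp
    then show ?thesis using that m(1) by blast
  next
    case False
    obtain m where m: "m \<in> P" "cmin n w P = Cost n w m" using cmin_in[OF neP] by blast
    have Ueq: "?U = 2 ^ ?L * (1 + real (Cost n w m))" using False nh neP m(2) unfolding Phi_def by simp
    have c1: "Cost n w m \<noteq> 0"
    proof
      assume "Cost n w m = 0"
      then have "m = Z" using Cost_zero[OF vi vP[OF m(1)]] by blast
      then show False using False m(1) online_Z by blast
    qed
    define V where "V = {v. v < n \<and> m v}"
    have finV: "finite V" unfolding V_def by simp
    have sumV: "(\<Sum>v\<in>V. 2 ^ ?L * real (w v)) = 2 ^ ?L * real (Cost n w m)"
      unfolding V_def Cost_def by (simp add: sum_distrib_left)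
    have "F m \<le> ?U - 1 / (6 * real n) * (\<Sum>v\<in>V. 2 ^ ?L * real (w v))"
      unfolding F_def
    proof (rule expect_drop[where B="?K" and V="V" and pt="\<lambda>v. m(v := \<not> m v)"])
      show "\<bar>Phi n E w (semo_update n E w P z)\<bar> \<le> ?K" for z by (rule Phi_abs)
      show "z \<in> set_pmf (mutate n E m) \<Longrightarrow> Phi n E w (semo_update n E w P z) \<le> ?U" for z
        using mbnd[OF m(1)] by blast
      show "inj_on (\<lambda>v. m(v := \<not> m v)) V"
        unfolding V_def by (auto simp: inj_on_def fun_eq_iff)
      show "Phi n E w (semo_update n E w P (m(u := \<not> m u))) \<le> ?U - 2 ^ ?L * real (w u)" if u: "u \<in> V" for u
      proof -
        have u': "u < n" "m u" using u V_def by auto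
        have cd: "Cost n w (m(u := False)) + w u = Cost n w m" by (rule Cost_del[of u n m w, OF u'])
        have wu: "0 < w u" using vi u'(1) by (auto simp: valid_instance_def)
        have "\<And>z. z \<in> P \<Longrightarrow> Cost n w (m(u := False)) < Cost n w z"
          using cmin_le[of _ P n w] m(2) cd wu by fastforce
        then have "Phi n E w (semo_update n E w P (m(u := False))) \<le> 2 ^ ?L * (1 + real (Cost n w (m(u := False))))"
          by (rule phi_drop[OF vi inv])
        also have "\<dots> = ?U - 2 ^ ?L * real (w u)"
        proof -
          have "real (Cost n w (m(u := False))) = real (Cost n w m) - real (w u)" using cd by linarith
          then show ?thesis unfolding Ueq by (simp add: right_diff_distrib distrib_left)
        qed
        finally show ?thesis using u' by simp
      qed
      show "u \<in> V \<Longrightarrow> 1 / (6 * real n) \<le> pmf (mutate n E m) (m(u := \<not> m u))" for u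
        using q[of u m] V_def by blast
    qed (use finV in auto)
    also have "?U - 1 / (6 * real n) * (\<Sum>v\<in>V. 2 ^ ?L * real (w v)) \<le> ?U - ?U / (12 * real n)"
    proof -
      have "?U / 2 \<le> 2 ^ ?L * real (Cost n w m)" unfolding Ueq using c1 by (simp add: algebra_simps)
      then have "?U / 2 / (6 * real n) \<le> 2 ^ ?L * real (Cost n w m) / (6 * real n)"
        using nr by (intro divide_right_mono) auto
      then show ?thesis using sumV by simp
    qed
    finally show ?thesis using that m(1) by blast
  qed
  have "(\<Sum>x\<in>P. F x) = F m + (\<Sum>x\<in>P - {m}. F x)" using finP m(1) by (simp add: sum.remove)
  also have "(\<Sum>x\<in>P - {m}. F x) \<le> (\<Sum>x\<in>P - {m}. ?U)" using Fle by (intro sum_mono) auto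
  also have "(\<Sum>x\<in>P - {m}. ?U) = (real (card P) - 1) * ?U"
  proof -
    have "0 < card P" using finP m(1) card_gt_0_iff by blast
    then show ?thesis using finP m(1) by (simp add: card_Diff_singleton of_nat_diff Suc_le_eq)
  qed
  finally have S: "(\<Sum>x\<in>P. F x) \<le> real (card P) * ?U - ?U / (12 * real n)"
    using m(2) by (simp add: algebra_simps)
  have cP: "1 \<le> real (card P)" "real (card P) \<le> 2 * real ?L + 1"
    using card_P[OF vi inv] finP neP by (auto simp: Suc_le_eq card_gt_0_iff)
  have "(\<Sum>x\<in>P. F x) / real (card P) \<le> ?U - ?U / (12 * real n * real (card P))"
    using S cP by (simp add: field_simps)
  also have "?U / (12 * real n * real (card P)) \<ge> ?U / (12 * real n * (2 * real ?L + 1))"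
    using U0 cP nr by (intro divide_left_mono mult_left_mono) auto
  then have "?U - ?U / (12 * real n * real (card P)) \<le> (1 - 1 / (12 * real n * (2 * real ?L + 1))) * ?U"
    by (simp add: algebra_simps)
  finally show ?thesis using Eq by simp
qed



lemma sp_inv:
  assumes vi: "valid_instance n E w"
  shows "P \<in> set_pmf (stopped_pop n E w t) \<Longrightarrow> Inv n E w P"
proof (induct t arbitrary: P)
  case 0
  then obtain x where x: "x \<in> set_pmf (init_point n)" "P = {x}" by auto
  have "valid_pt n x" using set_Pi_pmf_subset[of "{..<n}" False] x(1)
    unfolding init_point_def valid_pt_def by fastforce
  then show ?case using x(2) by (auto simp: Inv_def)
next
  case (Suc t)
  then obtain P0 where P0: "P0 \<in> set_pmf (stopped_pop n E w t)"
    "P \<in> set_pmf (if hit n E w P0 then return_pmf P0 else semo_step n E w P0)" by auto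
  have inv0: "Inv n E w P0" using Suc(1) P0(1) .
  show ?case
  proof (cases "hit n E w P0")
    case True then show ?thesis using P0 inv0 by auto
  next
    case False
    then have "P \<in> set_pmf (semo_step n E w P0)" using P0 by simp
    then obtain x x' where "x \<in> set_pmf (pmf_of_set P0)" "x' \<in> set_pmf (mutate n E x)"
      "P = semo_update n E w P0 x'" unfolding semo_step_def by auto
    moreover have "finite P0" "P0 \<noteq> {}" using inv0 by (auto simp: Inv_def)
    ultimately have "x \<in> P0" "x' \<in> set_pmf (mutate n E x)" "P = semo_update n E w P0 x'" by auto
    then show ?thesis using update_inv[OF inv0] mutate_valid inv0 unfolding Inv_def by metis
  qed
qed

lemma expect_bound:
  fixes M :: "'a pmf" and f :: "'a \<Rightarrow> real"
  assumes "\<And>x. \<bar>f x\<bar> \<le> B"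
  shows "\<bar>measure_pmf.expectation M f\<bar> \<le> B"
proof -
  have int: "integrable (measure_pmf M) f" by (rule measure_pmf.integrable_const_bound[where B=B]) (auto simp: assms)
  have "measure_pmf.expectation M f \<le> B"
    using assms abs_le_D1 by (intro measure_pmf.integral_le_const[OF int]) auto
  moreover have "- B \<le> measure_pmf.expectation M f"
  proof -
    have "measure_pmf.expectation M (\<lambda>x. - f x) \<le> B"
      using assms int by (intro measure_pmf.integral_le_const) (auto simp: abs_le_iff)
    then show ?thesis by simp
  qed
  ultimately show ?thesis by simp
qed

lemma sp_expect:
  assumes vi: "valid_instance n E w" and n2: "n \<ge> 2"
  defines "d \<equiv> 1 / (12 * real n * (2 * real (OPT n E w) + 1))"
  defines "K \<equiv> 2 ^ OPT n E w * (1 + real (\<Sum>i<n. w i))"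
  shows "measure_pmf.expectation (stopped_pop n E w t) (Phi n E w) \<le> (1 - d) ^ t * K"
proof (induct t)
  case 0
  have "measure_pmf.expectation (stopped_pop n E w 0) (Phi n E w) \<le> K"
    unfolding K_def
    by (intro measure_pmf.integral_le_const measure_pmf.integrable_const_bound[where B=K])
       (auto simp: K_def Phi_bound Phi_abs simp del: of_nat_sum)
  then show ?case by simp
next
  case (Suc t)
  have den: "1 \<le> 12 * real n * (2 * real (OPT n E w) + 1)"
  proof -
    have "1 \<le> 12 * real n" using n2 by simp
    also have "\<dots> \<le> 12 * real n * (2 * real (OPT n E w) + 1)" by (intro mult_le_cancel_left1[THEN iffD2]) auto
    finally show ?thesis .
  qed
  have d01: "0 \<le> d" "d \<le> 1" unfolding d_def using den by auto
  let ?f = "\<lambda>P. if hit n E w P then return_pmf P else semo_step n E w P"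
  have "measure_pmf.expectation (stopped_pop n E w (Suc t)) (Phi n E w)
        = measure_pmf.expectation (stopped_pop n E w t) (\<lambda>P. measure_pmf.expectation (?f P) (Phi n E w))"
    by (simp only: stopped_pop.simps, rule expectation_bind_pmf_bdd[where B=K]) (unfold K_def, rule Phi_abs)
  also have "\<dots> \<le> measure_pmf.expectation (stopped_pop n E w t) (\<lambda>P. (1 - d) * Phi n E w P)"
  proof (rule integral_mono_AE)
    show "integrable (measure_pmf (stopped_pop n E w t)) (\<lambda>P. measure_pmf.expectation (?f P) (Phi n E w))"
      by (rule measure_pmf.integrable_const_bound[where B=K])
         (auto intro!: expect_bound simp: K_def Phi_abs simp del: of_nat_sum)
    show "integrable (measure_pmf (stopped_pop n E w t)) (\<lambda>P. (1 - d) * Phi n E w P)"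
      by (intro integrable_mult_right measure_pmf.integrable_const_bound[where B=K])
         (auto simp: K_def Phi_abs simp del: of_nat_sum)
    show "AE P in measure_pmf (stopped_pop n E w t). measure_pmf.expectation (?f P) (Phi n E w) \<le> (1 - d) * Phi n E w P"
    proof (subst AE_measure_pmf_iff, intro ballI)
      fix P assume P: "P \<in> set_pmf (stopped_pop n E w t)"
      show "measure_pmf.expectation (?f P) (Phi n E w) \<le> (1 - d) * Phi n E w P"
      proof (cases "hit n E w P")
        case True then show ?thesis by (simp add: Phi_def)
      next
        case False
        then show ?thesis using step_expect[OF vi n2 sp_inv[OF vi P]] unfolding d_def by simp
      qed
    qed
  qed
  also have "\<dots> = (1 - d) * measure_pmf.expectation (stopped_pop n E w t) (Phi n E w)" by simp
  also have "\<dots> \<le> (1 - d) * ((1 - d) ^ t * K)" using Suc d01 by (intro mult_left_mono) auto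
  finally show ?case by simp
qed

lemma prob_le_expect:
  assumes vi: "valid_instance n E w"
  shows "measure_pmf.prob (stopped_pop n E w t) {P. \<not> hit n E w P}
           \<le> measure_pmf.expectation (stopped_pop n E w t) (Phi n E w)"
proof -
  let ?M = "stopped_pop n E w t"
  let ?K = "2 ^ OPT n E w * (1 + real (\<Sum>i<n. w i)) :: real"
  have "measure_pmf.prob ?M {P. \<not> hit n E w P} = measure_pmf.expectation ?M (indicator {P. \<not> hit n E w P})"
    by simp
  also have "\<dots> \<le> measure_pmf.expectation ?M (Phi n E w)"
  proof (rule integral_mono_AE)
    show "integrable (measure_pmf ?M) (indicat_real {P. \<not> hit n E w P})"
      by (auto intro!: integrable_real_indicator simp: less_top[symmetric] measure_pmf.emeasure_finite)
    show "integrable (measure_pmf ?M) (Phi n E w)"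
      by (rule measure_pmf.integrable_const_bound[where B="?K"]) (auto simp: Phi_abs simp del: of_nat_sum)
    show "AE P in measure_pmf ?M. indicat_real {P. \<not> hit n E w P} P \<le> Phi n E w P"
    proof (subst AE_measure_pmf_iff, intro ballI)
      fix P assume P: "P \<in> set_pmf ?M"
      have "P \<noteq> {}" using sp_inv[OF vi P] by (simp add: Inv_def)
      then show "indicat_real {P. \<not> hit n E w P} P \<le> Phi n E w P"
        using Phi_ge1[of n E w P] Phi_nonneg[of n E w P] by (auto simp: indicator_def)
    qed
  qed
  finally show ?thesis .
qed



lemma n_ge2: "valid_instance n E w \<Longrightarrow> E \<noteq> {} \<Longrightarrow> n \<ge> 2"
proof -
  assume vi: "valid_instance n E w" and ne: "E \<noteq> {}"
  then obtain e where "e \<in> E" by blast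
  then obtain i j where "e = {i,j}" "i \<noteq> j" "i < n" "j < n" using edge_two[OF vi] by metis
  then show "n \<ge> 2" by linarith
qed

lemma S_le: assumes "valid_instance n E w" "n \<ge> 1"
  shows "real (\<Sum>i<n. w i) \<le> real n * real (Wmax n w)" "1 \<le> Wmax n w"
proof -
  have "\<And>i. i < n \<Longrightarrow> w i \<le> Wmax n w" unfolding Wmax_def by (intro Max_ge) auto
  then have "(\<Sum>i<n. w i) \<le> (\<Sum>i<n. Wmax n w)" by (intro sum_mono) auto
  then have "(\<Sum>i<n. w i) \<le> n * Wmax n w" by simp
  then have "real (\<Sum>i<n. w i) \<le> real (n * Wmax n w)" by (rule of_nat_mono)
  then show "real (\<Sum>i<n. w i) \<le> real n * real (Wmax n w)" by simp
  have "w 0 \<le> Wmax n w" "0 < w 0" using assms unfolding Wmax_def valid_instance_def by (auto intro!: Max_ge)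
  then show "1 \<le> Wmax n w" by linarith
qed

lemma main_bound:
  assumes vi: "valid_instance n E w" and ne: "E \<noteq> {}"
  shows "expected_hitting_time n E w
          \<le> ennreal (200 * real (OPT n E w) * real n *
                (ln (real (Wmax n w)) + ln (real n) + real (OPT n E w)))"
proof -
  have n2: "n \<ge> 2" by (rule n_ge2[OF vi ne])
  have L1: "1 \<le> OPT n E w" by (rule OPT_pos[OF vi ne])
  define L where "L = real (OPT n E w)"
  define nn where "nn = real n"
  define W where "W = real (Wmax n w)"
  define S where "S = real (\<Sum>i<n. w i)"
  define d where "d = 1 / (12 * real n * (2 * real (OPT n E w) + 1))"
  define K where "K = 2 ^ OPT n E w * (1 + real (\<Sum>i<n. w i))"
  define A where "A = 12 * nn * (2 * L + 1)"
  have L1r: "1 \<le> L" using L1 unfolding L_def by simp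
  have nn2: "2 \<le> nn" using n2 unfolding nn_def by simp
  have W1: "1 \<le> W" using S_le(2)[OF vi] n2 unfolding W_def by simp
  have SnW: "S \<le> nn * W" using S_le(1)[OF vi] n2 unfolding S_def nn_def W_def by simp
  have S0: "0 \<le> S" unfolding S_def by (simp add: sum_nonneg)
  have A1: "24 \<le> A"
  proof -
    have "24 \<le> 12 * nn" using nn2 by simp
    also have "\<dots> \<le> 12 * nn * (2 * L + 1)" using L1r nn2 by (intro mult_le_cancel_left1[THEN iffD2]) auto
    finally show ?thesis unfolding A_def .
  qed
  have dA: "d = 1 / A" unfolding d_def A_def L_def nn_def by simp
  have d0: "0 < d" "d < 1" using A1 dA by auto
  have K1: "1 \<le> K" unfolding K_def by (rule one_le_pw)
  have K0: "0 < K" using K1 by simp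
  define T where "T = nat \<lceil>ln K / d\<rceil>"
  have lnK0: "0 \<le> ln K" using K1 by simp
  have T_ge: "ln K / d \<le> real T" unfolding T_def by linarith
  have T_le: "real T \<le> ln K * A + 1"
  proof -
    have "real T = real_of_int \<lceil>ln K / d\<rceil>" unfolding T_def using lnK0 d0 by simp
    also have "\<dots> \<le> ln K / d + 1" by linarith
    finally show ?thesis unfolding dA by simp
  qed
  define b where "b = (\<lambda>t. if t < T then 1 else (1 - d) ^ (t - T))"
  let ?p = "\<lambda>t. measure_pmf.prob (stopped_pop n E w t) {P. \<not> hit n E w P}"
  have KT: "(1 - d) ^ T * K \<le> 1"
  proof -
    have "(1 - d) ^ T \<le> exp (- d) ^ T"
      using d0 exp_ge_add_one_self[of "- d"] by (intro power_mono) auto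
    also have "\<dots> = exp (- (d * real T))" by (simp add: exp_of_nat_mult[symmetric] mult.commute)
    also have "\<dots> \<le> exp (- ln K)" using T_ge d0 by (simp add: field_simps)
    also have "\<dots> = 1 / K" using K0 by (simp add: exp_minus inverse_eq_divide)
    finally show ?thesis using K0 by (simp add: field_simps)
  qed
  have pb: "?p t \<le> b t" for t
  proof (cases "t < T")
    case True then show ?thesis unfolding b_def by simp
  next
    case False
    have "?p t \<le> (1 - d) ^ t * K"
      using prob_le_expect[OF vi, of t] sp_expect[OF vi n2, of t] unfolding d_def K_def by linarith
    also have "\<dots> = (1 - d) ^ (t - T) * ((1 - d) ^ T * K)"
      using False by (simp add: power_add[symmetric])
    also have "\<dots> \<le> (1 - d) ^ (t - T) * 1" using KT d0 by (intro mult_left_mono) auto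
    finally show ?thesis using False unfolding b_def by simp
  qed
  have b0: "0 \<le> b t" for t unfolding b_def using d0 by auto
  have bs: "summable b"
  proof -
    have "summable (\<lambda>t. b (t + T))" unfolding b_def using d0 by (simp add: summable_geometric)
    then show ?thesis using summable_iff_shift by blast
  qed
  have bsum: "(\<Sum>t. b t) = A + real T"
  proof -
    have "(\<Sum>t. b t) = (\<Sum>t. b (t + T)) + sum b {..<T}" by (rule suminf_split_initial_segment[OF bs])
    also have "(\<Sum>t. b (t + T)) = (\<Sum>t. (1 - d) ^ t)" unfolding b_def by simp
    also have "\<dots> = 1 / d" using d0 by (simp add: suminf_geometric)
    also have "sum b {..<T} = real T" unfolding b_def by simp
    finally show ?thesis unfolding dA by simp
  qed
  have "expected_hitting_time n E w \<le> (\<Sum>t. ennreal (b t))"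
    unfolding expected_hitting_time_def
    by (intro suminf_le) (auto intro: ennreal_leI pb)
  also have "\<dots> = ennreal (A + real T)" using suminf_ennreal2[OF b0 bs] bsum by simp
  also have "A + real T \<le> 200 * real (OPT n E w) * real n *
                (ln (real (Wmax n w)) + ln (real n) + real (OPT n E w))"
  proof -
    define X where "X = ln W + ln nn + L"
    have lnW: "0 \<le> ln W" using W1 by simp
    have lnn: "0 \<le> ln nn" using nn2 by simp
    have X1: "1 \<le> X" unfolding X_def using lnW lnn L1r by simp
    have ln2: "ln (2::real) \<le> 1" using ln_2_less_1 by simp
    have "ln K = L * ln 2 + ln (1 + S)"
    proof -
      have p1: "0 < (2::real) ^ OPT n E w" by simp
      have p2: "0 < 1 + S" using S0 by simp
      have "ln K = ln (2 ^ OPT n E w * (1 + S))" unfolding K_def S_def by simp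
      also have "\<dots> = ln (2 ^ OPT n E w) + ln (1 + S)" using p1 p2 by (simp add: ln_mult)
      finally have "ln K = ln (2 ^ OPT n E w) + ln (1 + S)" .
      then show ?thesis unfolding L_def by (simp add: ln_realpow)
    qed
    also have "ln (1 + S) \<le> ln (2 * nn * W)"
    proof -
      have "1 \<le> nn * W" using mult_mono[of 1 nn 1 W] nn2 W1 by simp
      then have "1 + S \<le> 2 * nn * W" using SnW by simp
      then show ?thesis using S0 by (intro ln_mono) auto
    qed
    also have "ln (2 * nn * W) = ln 2 + ln nn + ln W" using nn2 W1 by (simp add: ln_mult)
    finally have "ln K \<le> L * ln 2 + (ln 2 + ln nn + ln W)" by simp
    also have "\<dots> \<le> L + (1 + ln nn + ln W)" using ln2 L1r by (intro add_mono) (auto simp: mult_left_le)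
    finally have lnKX: "ln K \<le> 2 * X" unfolding X_def using L1r lnW lnn by simp
    define Pn where "Pn = nn * L"
    have P1: "1 \<le> Pn" unfolding Pn_def using mult_mono[of 1 nn 1 L] nn2 L1r by simp
    have AP: "A \<le> 36 * Pn" unfolding A_def Pn_def using L1r nn2 by (simp add: algebra_simps)
    have "A + real T \<le> A + (ln K * A + 1)" using T_le by simp
    also have "ln K * A \<le> (2 * X) * (36 * Pn)" using lnKX AP lnK0 A1 by (intro mult_mono) auto
    also have "1 \<le> Pn * X" using mult_mono[of 1 Pn 1 X] P1 X1 by simp
    also have "A \<le> 36 * Pn * X"
    proof -
      have "36 * Pn * 1 \<le> 36 * Pn * X" using X1 P1 by (intro mult_left_mono) auto
      then show ?thesis using AP by simp
    qed
    finally have "A + real T \<le> 109 * (Pn * X)" by (simp add: algebra_simps)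
    also have "\<dots> \<le> 200 * (Pn * X)" using P1 X1 by (simp add: mult_mono)
    finally show ?thesis unfolding Pn_def X_def L_def nn_def W_def by (simp add: algebra_simps)
  qed
  then have "ennreal (A + real T) \<le> ennreal (200 * real (OPT n E w) * real n *
                (ln (real (Wmax n w)) + ln (real n) + real (OPT n E w)))" by (rule ennreal_leI)
  finally show ?thesis .
qed

theorem lemma5:
  "\<exists>C::real. C > 0 \<and>
     (\<forall>n E w. valid_instance n E w \<and> E \<noteq> {} \<longrightarrow>
        expected_hitting_time n E w
          \<le> ennreal (C * real (OPT n E w) * real n *
                (ln (real (Wmax n w)) + ln (real n) + real (OPT n E w))))"
  by (rule exI[of _ 200]) (auto intro: main_bound)


end
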